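(* Let $k\ge5$ and let $E$ be a set with $\{0,1,2,k\}\subseteq E\subset\{0,1,\ldots,k\}$ and $|E|=k$ (so exactly one element of $\{3,\ldots,k-1\}$ is missing from $E$). Then the number of $\tau\in\mathcal{S}_k$ with $\mathcal{J}(\tau)=E$ equals $2^{k-3}$ if $k-1\notin E$, and $2^{k-4}$ if $k-1\in E$.
   Context: The pattern of a word of $j$ distinct letters is its order-preserving relabeling by $\{1,\ldots,j\}$; the length-$j$ initial pattern of $\tau$ is the pattern of $\tau_1\ldots\tau_j$. The $j$-set $\mathcal{J}(\tau)$ of $\tau\in\mathcal{S}_k$ is the set consisting of $0$ together with all $j\in\{1,\ldots,k\}$ such that the length-$j$ initial pattern of $\tau$ is an involution in $\mathcal{S}_j$. *)

theory Defs
  imports "HOL-Combinatorics.Permutations"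
begin

text \<open>The length-j initial pattern of tau is the order-preserving relabelling of
  tau 1 ... tau j by 1..j: position i is sent to the rank of tau i among
  tau 1, ..., tau j.\<close>

definition init_pattern :: "(nat \<Rightarrow> nat) \<Rightarrow> nat \<Rightarrow> nat \<Rightarrow> nat" where
  "init_pattern \<tau> j i = (if i \<in> {1..j} then card {l \<in> {1..j}. \<tau> l \<le> \<tau> i} else i)"

definition is_involution_on :: "(nat \<Rightarrow> nat) \<Rightarrow> nat set \<Rightarrow> bool" where
  "is_involution_on \<sigma> A \<longleftrightarrow> (\<forall>i\<in>A. \<sigma> (\<sigma> i) = i)"

definition jset :: "nat \<Rightarrow> (nat \<Rightarrow> nat) \<Rightarrow> nat set" where
  "jset k \<tau> = {0} \<union> {j \<in> {1..k}. init_pattern \<tau> j permutes {1..j}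
                               \<and> is_involution_on (init_pattern \<tau> j) {1..j}}"

end

theory Submission
  imports Defs
begin

definition sh :: "nat \<Rightarrow> nat \<Rightarrow> nat" where
  "sh r x = (if x < r then x else Suc x)"

definition extp :: "(nat \<Rightarrow> nat) \<Rightarrow> nat \<Rightarrow> nat \<Rightarrow> nat \<Rightarrow> nat" where
  "extp \<sigma> n r = (\<lambda>i. if i = Suc n then r else if 1 \<le> i \<and> i \<le> n then sh r (\<sigma> i) else i)"

definition perms :: "nat \<Rightarrow> (nat \<Rightarrow> nat) set" where
  "perms n = {\<sigma>. \<sigma> permutes {1..n}}"

lemma finite_perms: "finite (perms n)"
  unfolding perms_def by (rule finite_permutations) simp

lemma perm_range: "\<sigma> permutes {1..n} \<Longrightarrow> 1 \<le> i \<Longrightarrow> i \<le> n \<Longrightarrow> 1 \<le> \<sigma> i \<and> \<sigma> i \<le> n"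
  using permutes_in_image[of \<sigma> "{1..n}" i] by auto

lemma perm_out: "\<sigma> permutes {1..n} \<Longrightarrow> i \<notin> {1..n} \<Longrightarrow> \<sigma> i = i"
  by (rule permutes_not_in)

lemma perm_inj: "\<sigma> permutes {1..n} \<Longrightarrow> \<sigma> i = \<sigma> j \<Longrightarrow> i = j"
  using permutes_inj[of \<sigma>] by (auto simp: inj_def)

lemma sh_inj: "sh r x = sh r y \<longleftrightarrow> x = y"
  by (auto simp: sh_def)

lemma sh_le: "sh r x \<le> sh r y \<longleftrightarrow> x \<le> y"
  by (auto simp: sh_def)

lemma extp_permutes:
  assumes "\<sigma> permutes {1..n}" "1 \<le> r" "r \<le> Suc n"
  shows "extp \<sigma> n r permutes {1..Suc n}"
proof (rule inj_imp_permutes)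
  show "inj_on (extp \<sigma> n r) {1..Suc n}"
  proof (rule inj_onI)
    fix x y assume x: "x \<in> {1..Suc n}" and y: "y \<in> {1..Suc n}" and e: "extp \<sigma> n r x = extp \<sigma> n r y"
    have rx: "sh r z \<noteq> r" for z by (simp add: sh_def)
    have ex: "x \<le> n \<Longrightarrow> extp \<sigma> n r x = sh r (\<sigma> x)" using x by (simp add: extp_def)
    have ey: "y \<le> n \<Longrightarrow> extp \<sigma> n r y = sh r (\<sigma> y)" using y by (simp add: extp_def)
    have eS: "extp \<sigma> n r (Suc n) = r" by (simp add: extp_def)
    show "x = y"
    proof (cases "x = Suc n")
      case True
      then show ?thesis
        by (metis e eS ey rx y atLeastAtMost_iff le_Suc_eq)
    next
      case False
      then have "x \<le> n" using x by simp
      show ?thesis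
      proof (cases "y = Suc n")
        case True
        then show ?thesis by (metis e eS ex rx \<open>x \<le> n\<close>)
      next
        case False
        then have "y \<le> n" using y by simp
        then show ?thesis using e ex ey \<open>x \<le> n\<close> perm_inj[OF assms(1)] sh_inj by metis
      qed
    qed
  qed
next
  fix x assume "x \<in> {1..Suc n}"
  then show "extp \<sigma> n r x \<in> {1..Suc n}"
    using perm_range[OF assms(1), of x] assms by (auto simp: extp_def sh_def)
next
  fix x assume "x \<notin> {1..Suc n}"
  then show "extp \<sigma> n r x = x" by (auto simp: extp_def)
qed simp

definition dele :: "(nat \<Rightarrow> nat) \<Rightarrow> nat \<Rightarrow> nat \<Rightarrow> nat" where
  "dele \<tau> n = (\<lambda>i. if 1 \<le> i \<and> i \<le> n then (if \<tau> i < \<tau> (Suc n) then \<tau> i else \<tau> i - 1) else i)"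

lemma dele_permutes:
  assumes "\<tau> permutes {1..Suc n}"
  shows "dele \<tau> n permutes {1..n}"
proof (rule inj_imp_permutes)
  have ne: "1 \<le> i \<Longrightarrow> i \<le> n \<Longrightarrow> \<tau> i \<noteq> \<tau> (Suc n)" for i
    using perm_inj[OF assms, of i "Suc n"] by auto
  show "inj_on (dele \<tau> n) {1..n}"
  proof (rule inj_onI)
    fix x y assume x: "x \<in> {1..n}" and y: "y \<in> {1..n}" and e: "dele \<tau> n x = dele \<tau> n y"
    have "\<tau> x = \<tau> y" using e x y ne[of x] ne[of y] perm_range[OF assms, of x] perm_range[OF assms, of y]
      by (auto simp: dele_def split: if_splits)
    then show "x = y" by (rule perm_inj[OF assms])
  qed
next
  fix x assume x: "x \<in> {1..n}"
  have ne: "\<tau> x \<noteq> \<tau> (Suc n)"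
    using perm_inj[OF assms, of x "Suc n"] x by auto
  then show "dele \<tau> n x \<in> {1..n}"
    using perm_range[OF assms, of x] perm_range[OF assms, of "Suc n"] x by (auto simp: dele_def)
next
  fix x assume "x \<notin> {1..n}"
  then show "dele \<tau> n x = x" by (auto simp: dele_def)
qed simp

lemma extp_dele:
  assumes "\<tau> permutes {1..Suc n}"
  shows "extp (dele \<tau> n) n (\<tau> (Suc n)) = \<tau>"
proof
  fix i
  have ne: "1 \<le> i \<Longrightarrow> i \<le> n \<Longrightarrow> \<tau> i \<noteq> \<tau> (Suc n)"
    using perm_inj[OF assms, of i "Suc n"] by auto
  show "extp (dele \<tau> n) n (\<tau> (Suc n)) i = \<tau> i"
    using ne perm_out[OF assms, of i] perm_range[OF assms, of i]
    by (auto simp: extp_def dele_def sh_def)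
qed

lemma extp_inj:
  assumes "\<sigma> permutes {1..n}" "\<sigma>' permutes {1..n}" "extp \<sigma> n r = extp \<sigma>' n r'"
  shows "\<sigma> = \<sigma>' \<and> r = r'"
proof
  show r: "r = r'" using fun_cong[OF assms(3), of "Suc n"] by (simp add: extp_def)
  show "\<sigma> = \<sigma>'"
  proof
    fix i
    show "\<sigma> i = \<sigma>' i"
    proof (cases "1 \<le> i \<and> i \<le> n")
      case True
      then show ?thesis using fun_cong[OF assms(3), of i] r by (simp add: extp_def sh_inj)
    next
      case False
      then show ?thesis using perm_out[OF assms(1), of i] perm_out[OF assms(2), of i] by auto
    qed
  qed
qed

lemma perms_Suc:
  "perms (Suc n) = (\<lambda>(\<sigma>, r). extp \<sigma> n r) ` (perms n \<times> {1..Suc n})"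
proof
  show "perms (Suc n) \<subseteq> (\<lambda>(\<sigma>, r). extp \<sigma> n r) ` (perms n \<times> {1..Suc n})"
  proof
    fix \<tau> assume "\<tau> \<in> perms (Suc n)"
    then have t: "\<tau> permutes {1..Suc n}" by (simp add: perms_def)
    have "(dele \<tau> n, \<tau> (Suc n)) \<in> perms n \<times> {1..Suc n}"
      using dele_permutes[OF t] perm_range[OF t, of "Suc n"] by (simp add: perms_def)
    then show "\<tau> \<in> (\<lambda>(\<sigma>, r). extp \<sigma> n r) ` (perms n \<times> {1..Suc n})"
      using extp_dele[OF t] by force
  qed
next
  show "(\<lambda>(\<sigma>, r). extp \<sigma> n r) ` (perms n \<times> {1..Suc n}) \<subseteq> perms (Suc n)"
    using extp_permutes by (auto simp: perms_def)
qed

lemma inj_extp: "inj_on (\<lambda>(\<sigma>, r). extp \<sigma> n r) (perms n \<times> {1..Suc n})"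
  unfolding inj_on_def perms_def by clarify (use extp_inj in blast)

lemma sum_perms_Suc:
  "(\<Sum>\<tau>\<in>perms (Suc n). h \<tau>) = (\<Sum>\<sigma>\<in>perms n. \<Sum>r\<in>{1..Suc n}. h (extp \<sigma> n r))"
proof -
  have "(\<Sum>\<tau>\<in>perms (Suc n). h \<tau>) = (\<Sum>x\<in>perms n \<times> {1..Suc n}. h ((\<lambda>(\<sigma>, r). extp \<sigma> n r) x))"
    unfolding perms_Suc by (rule sum.reindex[OF inj_extp, unfolded comp_def])
  also have "\<dots> = (\<Sum>\<sigma>\<in>perms n. \<Sum>r\<in>{1..Suc n}. h (extp \<sigma> n r))"
    unfolding sum.cartesian_product by (rule sum.cong) auto
  finally show ?thesis .
qed

lemma card_eq_sum_ind: "finite A \<Longrightarrow> card {x\<in>A. P x} = (\<Sum>x\<in>A. if P x then 1 else 0)"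
  by (simp add: sum.If_cases Int_def)

lemma init_pattern_self:
  assumes "\<tau> permutes {1..N}"
  shows "init_pattern \<tau> N = \<tau>"
proof
  fix i
  show "init_pattern \<tau> N i = \<tau> i"
  proof (cases "i \<in> {1..N}")
    case True
    have "\<tau> ` {l\<in>{1..N}. \<tau> l \<le> \<tau> i} = {1..\<tau> i}"
    proof
      show "\<tau> ` {l\<in>{1..N}. \<tau> l \<le> \<tau> i} \<subseteq> {1..\<tau> i}"
        using perm_range[OF assms] by auto
      show "{1..\<tau> i} \<subseteq> \<tau> ` {l\<in>{1..N}. \<tau> l \<le> \<tau> i}"
      proof
        fix y assume y: "y \<in> {1..\<tau> i}"
        then have "y \<in> {1..N}" using perm_range[OF assms, of i] True by auto
        then obtain l where "l \<in> {1..N}" "\<tau> l = y"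
          using permutes_image[OF assms] by (metis imageE)
        then show "y \<in> \<tau> ` {l\<in>{1..N}. \<tau> l \<le> \<tau> i}" using y by auto
      qed
    qed
    moreover have "inj_on \<tau> {l\<in>{1..N}. \<tau> l \<le> \<tau> i}"
      using inj_on_subset[OF permutes_inj[OF assms] subset_UNIV] .
    ultimately have "card {l\<in>{1..N}. \<tau> l \<le> \<tau> i} = \<tau> i"
      by (metis card_image card_atLeastAtMost diff_Suc_1)
    then show ?thesis using True by (simp add: init_pattern_def)
  next
    case False
    have "init_pattern \<tau> N i = i" using False unfolding init_pattern_def by (simp only: if_False)
    then show ?thesis using perm_out[OF assms False] by simp
  qed
qed

lemma init_pattern_extp:
  assumes "j \<le> n"
  shows "init_pattern (extp \<sigma> n r) j = init_pattern \<sigma> j"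
proof
  fix i
  have "i \<in> {1..j} \<Longrightarrow> {l\<in>{1..j}. extp \<sigma> n r l \<le> extp \<sigma> n r i} = {l\<in>{1..j}. \<sigma> l \<le> \<sigma> i}"
    using assms by (auto simp: extp_def sh_le)
  then show "init_pattern (extp \<sigma> n r) j i = init_pattern \<sigma> j i"
    by (simp add: init_pattern_def)
qed

lemma jset_sub: "jset n \<sigma> \<subseteq> {0..n}"
  by (auto simp: jset_def)

lemma jset_extp:
  assumes "\<sigma> permutes {1..n}" "1 \<le> r" "r \<le> Suc n"
  shows "jset (Suc n) (extp \<sigma> n r) = jset n \<sigma> \<union>
     (if is_involution_on (extp \<sigma> n r) {1..Suc n} then {Suc n} else {})"
proof -
  have p: "extp \<sigma> n r permutes {1..Suc n}" by (rule extp_permutes[OF assms])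
  have ip: "init_pattern (extp \<sigma> n r) (Suc n) = extp \<sigma> n r" by (rule init_pattern_self[OF p])
  show ?thesis
  proof (rule set_eqI)
    fix x
    show "x \<in> jset (Suc n) (extp \<sigma> n r) \<longleftrightarrow> x \<in> jset n \<sigma> \<union>
     (if is_involution_on (extp \<sigma> n r) {1..Suc n} then {Suc n} else {})"
    proof (cases "x = Suc n")
      case True
      then show ?thesis using p ip by (auto simp: jset_def)
    next
      case False
      show ?thesis
      proof (cases "x \<le> n")
        case True
        then show ?thesis using False init_pattern_extp[OF True, of \<sigma> r] by (auto simp: jset_def)
      next
        case c2: False
        then show ?thesis using False by (auto simp: jset_def)
      qed
    qed
  qed
qed


definition good :: "(nat \<Rightarrow> nat) \<Rightarrow> nat \<Rightarrow> bool" where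
  "good \<sigma> n \<longleftrightarrow> (\<forall>i. \<sigma> n \<le> i \<and> i \<le> n \<longrightarrow> \<sigma> i = \<sigma> n + n - i)"

lemma goodD: "good \<sigma> n \<Longrightarrow> \<sigma> n \<le> i \<Longrightarrow> i \<le> n \<Longrightarrow> \<sigma> i = \<sigma> n + n - i"
  unfolding good_def by blast

lemma extp_Suc [simp]: "extp \<sigma> n r (Suc n) = r"
  by (simp add: extp_def)

lemma extp_in: "1 \<le> i \<Longrightarrow> i \<le> n \<Longrightarrow> extp \<sigma> n r i = sh r (\<sigma> i)"
  by (simp add: extp_def)

lemma invD: "is_involution_on \<sigma> {1..n} \<Longrightarrow> 1 \<le> i \<Longrightarrow> i \<le> n \<Longrightarrow> \<sigma> (\<sigma> i) = i"
  by (simp add: is_involution_on_def)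

lemma good_below:
  assumes p: "\<sigma> permutes {1..n}" and iv: "is_involution_on \<sigma> {1..n}" and g: "good \<sigma> n"
    and i: "1 \<le> i" "i < \<sigma> n"
  shows "\<sigma> i < \<sigma> n"
proof (rule ccontr)
  assume "\<not> \<sigma> i < \<sigma> n"
  have sn: "\<sigma> n \<le> n"
  proof (cases "n = 0")
    case True
    then show ?thesis using perm_out[OF p, of 0] by simp
  next
    case False
    then show ?thesis using perm_range[OF p, of n] by simp
  qed
  moreover have "i \<le> n" using i sn by simp
  moreover have "\<sigma> i \<le> n" using perm_range[OF p, of i] i \<open>i \<le> n\<close> by auto
  ultimately have "\<sigma> (\<sigma> i) = \<sigma> n + n - \<sigma> i" using goodD[OF g, of "\<sigma> i"] \<open>\<not> \<sigma> i < \<sigma> n\<close> by simp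
  moreover have "\<sigma> (\<sigma> i) = i" using invD[OF iv] i \<open>i \<le> n\<close> by simp
  ultimately show False using i \<open>\<sigma> i \<le> n\<close> by linarith
qed

lemma inv_ext_top:
  assumes p: "\<sigma> permutes {1..n}" and iv: "is_involution_on \<sigma> {1..n}"
  shows "is_involution_on (extp \<sigma> n (Suc n)) {1..Suc n}"
  unfolding is_involution_on_def
proof
  fix i assume i: "i \<in> {1..Suc n}"
  show "extp \<sigma> n (Suc n) (extp \<sigma> n (Suc n) i) = i"
  proof (cases "i = Suc n")
    case True then show ?thesis by simp
  next
    case False
    then have "i \<le> n" "1 \<le> i" using i by auto
    then have "extp \<sigma> n (Suc n) i = \<sigma> i" "1 \<le> \<sigma> i" "\<sigma> i \<le> n"
      using perm_range[OF p, of i] by (auto simp: extp_in sh_def)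
    then show ?thesis using invD[OF iv \<open>1 \<le> i\<close> \<open>i \<le> n\<close>] \<open>i \<le> n\<close> \<open>1 \<le> i\<close>
      by (simp add: extp_in sh_def)
  qed
qed

lemma inv_ext_top_rev:
  assumes p: "\<sigma> permutes {1..n}" and iv: "is_involution_on (extp \<sigma> n (Suc n)) {1..Suc n}"
  shows "is_involution_on \<sigma> {1..n}"
  unfolding is_involution_on_def
proof
  fix i assume i: "i \<in> {1..n}"
  then have "extp \<sigma> n (Suc n) i = \<sigma> i" "1 \<le> \<sigma> i" "\<sigma> i \<le> n"
    using perm_range[OF p, of i] by (auto simp: extp_in sh_def)
  moreover have "extp \<sigma> n (Suc n) (extp \<sigma> n (Suc n) i) = i" using invD[OF iv, of i] i by auto
  moreover have "\<sigma> (\<sigma> i) \<le> n" using perm_range[OF p, of "\<sigma> i"] calculation by simp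
  ultimately show "\<sigma> (\<sigma> i) = i" by (simp add: extp_in sh_def)
qed

lemma inv_ext_good:
  assumes p: "\<sigma> permutes {1..n}" and n: "1 \<le> n" and iv: "is_involution_on \<sigma> {1..n}" and g: "good \<sigma> n"
  shows "is_involution_on (extp \<sigma> n (\<sigma> n)) {1..Suc n}"
  unfolding is_involution_on_def
proof
  define t where "t = \<sigma> n"
  have t: "1 \<le> t" "t \<le> n" using perm_range[OF p, of n] n by (auto simp: t_def)
  have st: "\<sigma> t = n" using invD[OF iv, of n] n by (simp add: t_def)
  have gg: "t \<le> i \<Longrightarrow> i \<le> n \<Longrightarrow> \<sigma> i = t + n - i" for i using goodD[OF g, of i] by (simp add: t_def)
  fix i assume i: "i \<in> {1..Suc n}"
  show "extp \<sigma> n (\<sigma> n) (extp \<sigma> n (\<sigma> n) i) = i"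
  proof -
    have "extp \<sigma> n t (extp \<sigma> n t i) = i"
    proof (cases "i = Suc n")
      case True
      then show ?thesis using t st by (simp add: extp_in sh_def)
    next
      case False
      then have i1: "1 \<le> i" "i \<le> n" using i by auto
      show ?thesis
      proof (cases "i < t")
        case True
        have "\<sigma> i < t" using good_below[OF p iv g i1(1)] True by (simp add: t_def)
        moreover have "1 \<le> \<sigma> i" "\<sigma> i \<le> n" using perm_range[OF p i1] by auto
        ultimately show ?thesis using invD[OF iv i1] i1 True by (simp add: extp_in sh_def)
      next
        case False
        then have e: "\<sigma> i = t + n - i" using gg i1 by simp
        show ?thesis
        proof (cases "i = t")
          case True
          then show ?thesis using st t by (simp add: extp_in sh_def)
        next
          case False
          then have "t < i" using \<open>\<not> i < t\<close> by simp
          have e1: "extp \<sigma> n t i = t + n - i + 1" using e i1 \<open>t < i\<close> by (simp add: extp_in sh_def)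
          have "\<sigma> (t + n - i + 1) = i - 1" using gg[of "t + n - i + 1"] \<open>t < i\<close> i1 by simp
          then show ?thesis using e1 \<open>t < i\<close> i1 t by (simp add: extp_in sh_def)
        qed
      qed
    qed
    then show ?thesis by (simp add: t_def)
  qed
qed

lemma inv_ext_only:
  assumes p: "\<sigma> permutes {1..n}" and n: "1 \<le> n" and iv: "is_involution_on \<sigma> {1..n}"
    and r: "1 \<le> r" "r \<le> n" and ie: "is_involution_on (extp \<sigma> n r) {1..Suc n}"
  shows "r = \<sigma> n \<and> good \<sigma> n"
proof -
  let ?\<tau> = "extp \<sigma> n r"
  have tt: "1 \<le> i \<Longrightarrow> i \<le> Suc n \<Longrightarrow> ?\<tau> (?\<tau> i) = i" for i using invD[OF ie] by simp
  have "?\<tau> r = Suc n" using tt[of "Suc n"] by simp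
  then have "sh r (\<sigma> r) = Suc n" using r by (simp add: extp_in)
  moreover have "\<sigma> r \<le> n" using perm_range[OF p r] by simp
  ultimately have sr: "\<sigma> r = n" by (auto simp: sh_def split: if_splits)
  then have rt: "r = \<sigma> n" using invD[OF iv r] by simp
  have key: "d \<le> n - r \<Longrightarrow> \<sigma> (n - d) = r + d" for d
  proof (induction d)
    case 0 then show ?case using rt by simp
  next
    case (Suc d)
    then have ih: "\<sigma> (n - d) = r + d" by simp
    have b: "r + d + 1 \<le> n" "n - d \<ge> r + 1" using Suc.prems by auto
    have "?\<tau> (n - d) = r + d + 1" using ih b r by (simp add: extp_in sh_def)
    then have "?\<tau> (r + d + 1) = n - d" using tt[of "n - d"] b r by simp
    then have e: "sh r (\<sigma> (r + d + 1)) = n - d" using b r by (simp add: extp_in)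
    have "\<sigma> (r + d + 1) = n - d - 1" using e b by (auto simp: sh_def split: if_splits)
    then have "\<sigma> (n - d - 1) = r + d + 1" using invD[OF iv, of "r + d + 1"] b r by simp
    moreover have "n - d - 1 = n - Suc d" by simp
    ultimately show ?case by simp
  qed
  have "good \<sigma> n"
    unfolding good_def
  proof (intro allI impI)
    fix i assume i: "\<sigma> n \<le> i \<and> i \<le> n"
    then have "n - i \<le> n - r" using rt by linarith
    then have "\<sigma> (n - (n - i)) = r + (n - i)" by (rule key)
    moreover have "n - (n - i) = i" using i by simp
    ultimately show "\<sigma> i = \<sigma> n + n - i" using rt i by simp
  qed
  then show ?thesis using rt by simp
qed

lemma G:
  assumes p: "\<sigma> permutes {1..n}" and n: "1 \<le> n" and iv: "is_involution_on \<sigma> {1..n}"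
    and r: "1 \<le> r" "r \<le> Suc n"
  shows "is_involution_on (extp \<sigma> n r) {1..Suc n} \<longleftrightarrow> r = Suc n \<or> (r = \<sigma> n \<and> good \<sigma> n)"
proof
  assume ie: "is_involution_on (extp \<sigma> n r) {1..Suc n}"
  show "r = Suc n \<or> (r = \<sigma> n \<and> good \<sigma> n)"
  proof (cases "r = Suc n")
    case False
    then show ?thesis using inv_ext_only[OF p n iv r(1) _ ie] r by simp
  qed simp
next
  assume "r = Suc n \<or> (r = \<sigma> n \<and> good \<sigma> n)"
  then show "is_involution_on (extp \<sigma> n r) {1..Suc n}"
    using inv_ext_top[OF p iv] inv_ext_good[OF p n iv] by auto
qed

lemma card_G:
  assumes p: "\<sigma> permutes {1..n}" and n: "1 \<le> n" and iv: "is_involution_on \<sigma> {1..n}"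
  shows "card {r\<in>{1..Suc n}. is_involution_on (extp \<sigma> n r) {1..Suc n}} = (if good \<sigma> n then 2 else 1)"
proof -
  have t: "1 \<le> \<sigma> n" "\<sigma> n \<le> n" using perm_range[OF p, of n] n by auto
  have "{r\<in>{1..Suc n}. is_involution_on (extp \<sigma> n r) {1..Suc n}} =
        (if good \<sigma> n then {\<sigma> n, Suc n} else {Suc n})"
    using G[OF p n iv] t by auto
  then show ?thesis using t by simp
qed

lemma good_ext:
  assumes p: "\<sigma> permutes {1..n}" and n: "1 \<le> n" and h: "r = Suc n \<or> (r = \<sigma> n \<and> good \<sigma> n)"
  shows "good (extp \<sigma> n r) (Suc n)"
  using h
proof
  assume "r = Suc n" then show ?thesis by (auto simp: good_def)
next
  assume h2: "r = \<sigma> n \<and> good \<sigma> n"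
  have t: "1 \<le> \<sigma> n" "\<sigma> n \<le> n" using perm_range[OF p, of n] n by auto
  show ?thesis unfolding good_def
  proof (intro allI impI)
    fix i assume i: "extp \<sigma> n r (Suc n) \<le> i \<and> i \<le> Suc n"
    show "extp \<sigma> n r i = extp \<sigma> n r (Suc n) + Suc n - i"
    proof (cases "i = Suc n")
      case False
      then have a: "i \<le> n" "1 \<le> i" "\<sigma> n \<le> i" using h2 i t by auto
      then have b: "\<sigma> i = \<sigma> n + n - i" using goodD[of \<sigma> n i] h2 by simp
      have "extp \<sigma> n r i = sh r (\<sigma> i)" using a by (simp add: extp_in)
      moreover have "Suc (\<sigma> n + n) - i = Suc (\<sigma> n + n - i)" "\<not> \<sigma> n + n - i < \<sigma> n" using a by arith+
      ultimately show ?thesis using a b h2 by (simp add: sh_def)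
    qed simp
  qed
qed

lemma good_ext_top:
  assumes p: "\<sigma> permutes {1..n}" and n: "1 \<le> n" and g: "good \<sigma> n"
  shows "good (extp \<sigma> n (Suc n)) n"
proof -
  have t: "1 \<le> \<sigma> n" "\<sigma> n \<le> n" using perm_range[OF p, of n] n by auto
  have e: "1 \<le> i \<Longrightarrow> i \<le> n \<Longrightarrow> extp \<sigma> n (Suc n) i = \<sigma> i" for i
    using perm_range[OF p, of i] by (simp add: extp_in sh_def)
  show ?thesis unfolding good_def
  proof (intro allI impI)
    fix i assume i: "extp \<sigma> n (Suc n) n \<le> i \<and> i \<le> n"
    then show "extp \<sigma> n (Suc n) i = extp \<sigma> n (Suc n) n + n - i"
      using e[of n] e[of i] t n goodD[OF g, of i] by auto
  qed
qed


lemma H_fwd: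
  assumes p: "\<sigma> permutes {1..n}" and n2: "2 \<le> n" and iv: "is_involution_on \<sigma> {1..n}"
    and g: "good \<sigma> n"
    and r: "1 \<le> r" "r \<le> Suc n" and s: "1 \<le> s" "s \<le> Suc (Suc n)"
    and ni: "\<not> is_involution_on (extp \<sigma> n r) {1..Suc n}"
    and pi: "is_involution_on (extp (extp \<sigma> n r) (Suc n) s) {1..Suc (Suc n)}"
  shows "r = (if \<sigma> n < n then n else \<sigma> (n - 1)) \<and> s = \<sigma> n"
proof -
  define \<rho> where "\<rho> = extp \<sigma> n r"
  define \<pi> where "\<pi> = extp \<rho> (Suc n) s"
  have n1: "1 \<le> n" using n2 by simp
  have pr: "\<rho> permutes {1..Suc n}" unfolding \<rho>_def by (rule extp_permutes[OF p r])
  have ni': "\<not> is_involution_on \<rho> {1..Suc n}" using ni by (simp add: \<rho>_def)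
  have pii: "1 \<le> i \<Longrightarrow> i \<le> Suc (Suc n) \<Longrightarrow> \<pi> (\<pi> i) = i" for i
    using invD[OF pi] by (simp add: \<pi>_def \<rho>_def)
  have sne: "s \<noteq> Suc (Suc n)"
  proof
    assume "s = Suc (Suc n)"
    then have "is_involution_on \<rho> {1..Suc n}"
      using inv_ext_top_rev[OF pr] pi by (simp add: \<rho>_def)
    then show False using ni' by simp
  qed
  then have s1: "s \<le> Suc n" using s by simp
  have "\<pi> s = Suc (Suc n)" using pii[of "Suc (Suc n)"] by (simp add: \<pi>_def)
  moreover have "\<pi> s = sh s (\<rho> s)" using s(1) s1 by (simp add: \<pi>_def extp_in)
  moreover have "\<rho> s \<le> Suc n" using perm_range[OF pr s(1) s1] by simp
  ultimately have rs: "\<rho> s = Suc n" by (auto simp: sh_def split: if_splits)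
  have sn: "s \<noteq> Suc n"
  proof
    assume "s = Suc n"
    then have "r = Suc n" using rs by (simp add: \<rho>_def)
    then show False using ni inv_ext_top[OF p iv] by simp
  qed
  then have s2: "s \<le> n" using s1 by simp
  have "\<rho> s = sh r (\<sigma> s)" using s(1) s2 by (simp add: \<rho>_def extp_in)
  moreover have "\<sigma> s \<le> n" using perm_range[OF p s(1) s2] by simp
  ultimately have ss: "\<sigma> s = n" "r \<le> n" using rs by (auto simp: sh_def split: if_splits)
  have st: "s = \<sigma> n" using invD[OF iv s(1) s2] ss by simp
  define t where "t = \<sigma> n"
  have t: "1 \<le> t" "t \<le> n" using perm_range[OF p, of n] n1 by (auto simp: t_def)
  have stt: "\<sigma> t = n" using ss st by (simp add: t_def)
  have \<rho>S: "\<rho> (Suc n) = r" by (simp add: \<rho>_def)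
  have pSn: "\<pi> (Suc n) = sh t r" using st \<rho>S by (simp add: \<pi>_def extp_in t_def)
  have piu: "\<pi> (sh t r) = Suc n" using pii[of "Suc n"] pSn by simp
  have "r = (if t < n then n else \<sigma> (n - 1))"
  proof (cases "t < n")
    case True
    show ?thesis
    proof (rule ccontr)
      assume "r \<noteq> (if t < n then n else \<sigma> (n - 1))"
      then have rn: "r < n" using True ss(2) by simp
      define u where "u = sh t r"
      have u: "1 \<le> u" "u \<le> n" using rn r t by (auto simp: u_def sh_def)
      have "\<pi> u = sh t (sh r (\<sigma> u))" using u st by (simp add: \<pi>_def \<rho>_def extp_in t_def)
      moreover have "\<sigma> u \<le> n" "1 \<le> \<sigma> u" using perm_range[OF p u] by auto
      moreover have "\<pi> u = Suc n" using piu by (simp add: u_def)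
      ultimately have su: "\<sigma> u = n - 1" using t rn by (auto simp: sh_def split: if_splits)
      have "\<sigma> (t + 1) = t + n - (t + 1)" using goodD[OF g, of "t + 1"] True by (simp add: t_def)
      then have "\<sigma> (t + 1) = \<sigma> u" using su by simp
      then have "u = t + 1" using perm_inj[OF p] by metis
      then have "r = t" using u_def by (auto simp: sh_def split: if_splits)
      then have "is_involution_on (extp \<sigma> n r) {1..Suc n}"
        using inv_ext_good[OF p n1 iv g] by (simp add: t_def)
      then show False using ni by simp
    qed
  next
    case False
    then have tn: "t = n" using t by simp
    have rn: "r \<noteq> n"
    proof
      assume "r = n"
      then have "r = \<sigma> n" using tn by (simp add: t_def)
      then have "is_involution_on (extp \<sigma> n r) {1..Suc n}"
        using inv_ext_good[OF p n1 iv g] by simp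
      then show False using ni by simp
    qed
    then have rn': "r < n" using ss(2) by simp
    have "sh t r = r" using tn rn' by (simp add: sh_def)
    then have "\<pi> r = Suc n" using piu by simp
    moreover have "\<pi> r = sh n (sh r (\<sigma> r))" using r(1) rn' st tn by (simp add: \<pi>_def \<rho>_def extp_in t_def)
    moreover have "\<sigma> r \<le> n" "1 \<le> \<sigma> r" using perm_range[OF p r(1)] rn' by auto
    ultimately have "\<sigma> r = n - 1" using rn' by (auto simp: sh_def split: if_splits)
    then have "r = \<sigma> (n - 1)" using invD[OF iv r(1)] rn' by simp
    then show ?thesis using False by simp
  qed
  then show ?thesis using st by (simp add: t_def)
qed

lemma H_lt:
  assumes p: "\<sigma> permutes {1..n}" and n2: "2 \<le> n" and iv: "is_involution_on \<sigma> {1..n}"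
    and g: "good \<sigma> n" and tl: "\<sigma> n < n"
  shows "\<not> is_involution_on (extp \<sigma> n n) {1..Suc n}
    \<and> is_involution_on (extp (extp \<sigma> n n) (Suc n) (\<sigma> n)) {1..Suc (Suc n)}
    \<and> \<not> good (extp (extp \<sigma> n n) (Suc n) (\<sigma> n)) (Suc (Suc n))"
proof -
  define t where "t = \<sigma> n"
  have n1: "1 \<le> n" using n2 by simp
  have t: "1 \<le> t" "t < n" using perm_range[OF p, of n] n1 tl by (auto simp: t_def)
  have stt: "\<sigma> t = n" using invD[OF iv, of n] n1 by (simp add: t_def)
  define \<rho> where "\<rho> = extp \<sigma> n n"
  define \<pi> where "\<pi> = extp \<rho> (Suc n) t"
  have \<rho>i: "1 \<le> i \<Longrightarrow> i \<le> n \<Longrightarrow> \<rho> i = sh n (\<sigma> i)" for i by (simp add: \<rho>_def extp_in)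
  have \<pi>i: "1 \<le> i \<Longrightarrow> i \<le> n \<Longrightarrow> \<pi> i = sh t (sh n (\<sigma> i))" for i by (simp add: \<pi>_def \<rho>i extp_in)
  have \<pi>S: "\<pi> (Suc n) = Suc n" using t by (simp add: \<pi>_def \<rho>_def extp_in sh_def)
  have \<pi>SS: "\<pi> (Suc (Suc n)) = t" by (simp add: \<pi>_def)
  have \<pi>t: "\<pi> t = Suc (Suc n)" using t stt by (simp add: \<pi>i sh_def)
  have A: "\<not> is_involution_on \<rho> {1..Suc n}"
  proof
    assume h: "is_involution_on \<rho> {1..Suc n}"
    have "\<rho> n = t" using n1 t by (simp add: \<rho>i sh_def t_def)
    moreover have "\<rho> (Suc n) = n" by (simp add: \<rho>_def)
    ultimately show False using invD[OF h, of "Suc n"] t by simp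
  qed
  have B: "is_involution_on \<pi> {1..Suc (Suc n)}"
    unfolding is_involution_on_def
  proof
    fix i assume i: "i \<in> {1..Suc (Suc n)}"
    show "\<pi> (\<pi> i) = i"
    proof (cases "i = Suc (Suc n)")
      case True then show ?thesis using \<pi>SS \<pi>t by simp
    next
      case F1: False
      show ?thesis
      proof (cases "i = Suc n")
        case True then show ?thesis using \<pi>S by simp
      next
        case F2: False
        then have i1: "1 \<le> i" "i \<le> n" using i F1 by auto
        show ?thesis
        proof (cases "i = t")
          case True then show ?thesis using \<pi>SS \<pi>t by simp
        next
          case F3: False
          show ?thesis
          proof (cases "i < t")
            case True
            have lt: "\<sigma> i < t" using good_below[OF p iv g i1(1)] True by (simp add: t_def)
            have r1: "1 \<le> \<sigma> i" using perm_range[OF p i1] by simp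
            have "\<pi> i = \<sigma> i" using lt t i1 by (simp add: \<pi>i sh_def)
            moreover have "\<pi> (\<sigma> i) = i" using lt t r1 invD[OF iv i1] True by (simp add: \<pi>i sh_def)
            ultimately show ?thesis by simp
          next
            case False
            then have ti: "t < i" using F3 by simp
            have e: "\<sigma> i = t + n - i" using goodD[OF g, of i] ti i1 by (simp add: t_def)
            have a1: "t + n - i < n" "\<not> t + n - i < t" "t + n - i + 1 \<le> n" "t \<le> t + n - i + 1"
              "1 \<le> t + n - i + 1" "t + n - (t + n - i + 1) = i - 1"
              "i - 1 < n" "\<not> i - 1 < t" "Suc (i - 1) = i" using ti i1 t by arith+
            have "\<pi> i = t + n - i + 1" using e i1 a1 by (simp add: \<pi>i sh_def)
            moreover have "\<sigma> (t + n - i + 1) = i - 1" using goodD[OF g, of "t + n - i + 1"] a1 by (simp add: t_def)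
            moreover have "\<pi> (t + n - i + 1) = sh t (sh n (\<sigma> (t + n - i + 1)))" using a1 by (simp add: \<pi>i)
            ultimately show ?thesis using a1 by (simp add: sh_def)
          qed
        qed
      qed
    qed
  qed
  have C: "\<not> good \<pi> (Suc (Suc n))"
  proof
    assume h: "good \<pi> (Suc (Suc n))"
    have "\<pi> (Suc n) = \<pi> (Suc (Suc n)) + Suc (Suc n) - Suc n"
      using goodD[OF h, of "Suc n"] \<pi>SS t by simp
    then show False using \<pi>S \<pi>SS t by simp
  qed
  show ?thesis using A B C by (simp add: \<pi>_def \<rho>_def t_def)
qed

lemma H_eq:
  assumes p: "\<sigma> permutes {1..n}" and n2: "2 \<le> n" and iv: "is_involution_on \<sigma> {1..n}"
    and tn: "\<sigma> n = n" and g2: "good \<sigma> (n - 1)"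
  shows "\<not> is_involution_on (extp \<sigma> n (\<sigma> (n - 1))) {1..Suc n}
    \<and> is_involution_on (extp (extp \<sigma> n (\<sigma> (n - 1))) (Suc n) (\<sigma> n)) {1..Suc (Suc n)}
    \<and> \<not> good (extp (extp \<sigma> n (\<sigma> (n - 1))) (Suc n) (\<sigma> n)) (Suc (Suc n))"
proof -
  define w where "w = \<sigma> (n - 1)"
  have w0: "1 \<le> w" "w \<le> n" using perm_range[OF p, of "n - 1"] n2 by (auto simp: w_def)
  have "w \<noteq> n"
  proof
    assume "w = n"
    then have "\<sigma> (n - 1) = \<sigma> n" using tn by (simp add: w_def)
    then have "n - 1 = n" by (rule perm_inj[OF p])
    then show False using n2 by simp
  qed
  then have w: "1 \<le> w" "w < n" using w0 by auto
  have sw: "\<sigma> w = n - 1" using invD[OF iv, of "n - 1"] n2 by (simp add: w_def)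
  have gw: "w \<le> i \<Longrightarrow> i \<le> n - 1 \<Longrightarrow> \<sigma> i = w + (n - 1) - i" for i
    using goodD[OF g2, of i] by (simp add: w_def)
  define \<rho> where "\<rho> = extp \<sigma> n w"
  define \<pi> where "\<pi> = extp \<rho> (Suc n) n"
  have \<rho>i: "1 \<le> i \<Longrightarrow> i \<le> n \<Longrightarrow> \<rho> i = sh w (\<sigma> i)" for i by (simp add: \<rho>_def extp_in)
  have \<pi>i: "1 \<le> i \<Longrightarrow> i \<le> n \<Longrightarrow> \<pi> i = sh n (sh w (\<sigma> i))" for i by (simp add: \<pi>_def \<rho>i extp_in)
  have \<rho>w: "\<rho> w = n" using w sw by (simp add: \<rho>i sh_def)
  have \<rho>n: "\<rho> n = Suc n" using w tn n2 by (simp add: \<rho>i sh_def)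
  have \<pi>S: "\<pi> (Suc n) = w" using w by (simp add: \<pi>_def \<rho>_def extp_in sh_def)
  have \<pi>SS: "\<pi> (Suc (Suc n)) = n" by (simp add: \<pi>_def)
  have \<pi>n: "\<pi> n = Suc (Suc n)" using \<rho>n n2 by (simp add: \<pi>_def extp_in sh_def)
  have \<pi>w: "\<pi> w = Suc n" using \<rho>w w by (simp add: \<pi>_def extp_in sh_def)
  have A: "\<not> is_involution_on \<rho> {1..Suc n}"
  proof
    assume h: "is_involution_on \<rho> {1..Suc n}"
    show False using invD[OF h, of w] w \<rho>w \<rho>n by simp
  qed
  have B: "is_involution_on \<pi> {1..Suc (Suc n)}"
    unfolding is_involution_on_def
  proof
    fix i assume i: "i \<in> {1..Suc (Suc n)}"
    show "\<pi> (\<pi> i) = i"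
    proof (cases "i = Suc (Suc n) \<or> i = n")
      case True then show ?thesis using \<pi>SS \<pi>n by auto
    next
      case F1: False
      show ?thesis
      proof (cases "i = Suc n \<or> i = w")
        case True then show ?thesis using \<pi>S \<pi>w by auto
      next
        case F2: False
        then have i1: "1 \<le> i" "i \<le> n - 1" "i \<noteq> w" using i F1 by auto
        show ?thesis
        proof (cases "i < w")
          case True
          have r1: "1 \<le> \<sigma> i" "\<sigma> i \<le> n" using perm_range[OF p, of i] i1 by auto
          have lt: "\<sigma> i < w"
          proof (rule ccontr)
            assume c: "\<not> \<sigma> i < w"
            have "\<sigma> i \<noteq> n"
            proof
              assume "\<sigma> i = n"
              moreover have "i \<le> n" using i1 by simp
              ultimately have "i = n" using invD[OF iv, of i] i1 tn by simp
              then show False using i1 n2 by simp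
            qed
            then have "\<sigma> i \<le> n - 1" using r1 by simp
            then have "\<sigma> (\<sigma> i) = w + (n - 1) - \<sigma> i" using gw c by simp
            moreover have "\<sigma> (\<sigma> i) = i" using invD[OF iv, of i] i1 by simp
            ultimately show False using True c \<open>\<sigma> i \<le> n - 1\<close> by simp
          qed
          have "\<pi> i = \<sigma> i" using lt w i1 by (simp add: \<pi>i sh_def)
          moreover have "\<pi> (\<sigma> i) = i" using lt w r1 invD[OF iv, of i] True i1 by (simp add: \<pi>i sh_def)
          ultimately show ?thesis by simp
        next
          case False
          then have wi: "w < i" using i1 by simp
          have e: "\<sigma> i = w + (n - 1) - i" using gw wi i1 by simp
          have a1: "i \<le> n" "\<not> w + (n - 1) - i < w" "Suc (w + (n - 1) - i) = w + n - i" "w + n - i < n"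
            "w \<le> w + n - i" "w + n - i \<le> n - 1" "1 \<le> w + n - i" "w + (n - 1) - (w + n - i) = i - 1"
            "\<not> i - 1 < w" "Suc (i - 1) = i" "i < n" using wi i1 w n2 by arith+
          have "\<pi> i = w + n - i" using e a1 i1 by (simp add: \<pi>i sh_def)
          moreover have "\<sigma> (w + n - i) = i - 1" using gw[of "w + n - i"] a1 by simp
          moreover have "\<pi> (w + n - i) = sh n (sh w (\<sigma> (w + n - i)))" using a1 by (simp add: \<pi>i)
          ultimately show ?thesis using a1 by (simp add: sh_def)
        qed
      qed
    qed
  qed
  have C: "\<not> good \<pi> (Suc (Suc n))"
  proof
    assume h: "good \<pi> (Suc (Suc n))"
    have "\<pi> (Suc n) = \<pi> (Suc (Suc n)) + Suc (Suc n) - Suc n"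
      using goodD[OF h, of "Suc n"] \<pi>SS by simp
    then show False using \<pi>S \<pi>SS w by simp
  qed
  show ?thesis using A B C tn by (simp add: \<pi>_def \<rho>_def w_def)
qed


lemma un_eq:
  assumes "A \<subseteq> {0..n}" "B \<subseteq> {0..n}"
  shows "(A \<union> (if P then {Suc n} else {}) = B \<union> (if Q then {Suc n} else {})) \<longleftrightarrow> (A = B \<and> (P \<longleftrightarrow> Q))"
proof
  assume h: "A \<union> (if P then {Suc n} else {}) = B \<union> (if Q then {Suc n} else {})"
  have "A = (A \<union> (if P then {Suc n} else {})) \<inter> {0..n}" using assms(1) by auto
  also have "\<dots> = (B \<union> (if Q then {Suc n} else {})) \<inter> {0..n}" using h by simp
  also have "\<dots> = B" using assms(2) by auto
  finally have ab: "A = B" .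
  have "P \<longleftrightarrow> Suc n \<in> A \<union> (if P then {Suc n} else {})" using assms(1) by auto
  also have "\<dots> \<longleftrightarrow> Suc n \<in> B \<union> (if Q then {Suc n} else {})" using h by simp
  also have "\<dots> \<longleftrightarrow> Q" using assms(2) by auto
  finally show "A = B \<and> (P \<longleftrightarrow> Q)" using ab by simp
qed simp

lemma jset_ext_iff:
  assumes "\<sigma> \<in> perms n" "1 \<le> r" "r \<le> Suc n" "A \<subseteq> {0..n}"
  shows "jset (Suc n) (extp \<sigma> n r) = A \<union> (if P then {Suc n} else {}) \<longleftrightarrow>
         jset n \<sigma> = A \<and> (is_involution_on (extp \<sigma> n r) {1..Suc n} \<longleftrightarrow> P)"
proof -
  have "jset (Suc n) (extp \<sigma> n r) = jset n \<sigma> \<union>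
     (if is_involution_on (extp \<sigma> n r) {1..Suc n} then {Suc n} else {})"
    using jset_extp assms by (simp add: perms_def)
  then show ?thesis using un_eq[OF jset_sub assms(4)] by simp
qed

lemma jset_top:
  assumes "\<sigma> permutes {1..n}" "1 \<le> n"
  shows "n \<in> jset n \<sigma> \<longleftrightarrow> is_involution_on \<sigma> {1..n}"
  using init_pattern_self[OF assms(1)] assms by (auto simp: jset_def)

definition Lay :: "nat \<Rightarrow> (nat \<Rightarrow> nat) set" where
  "Lay n = {\<sigma>\<in>perms n. jset n \<sigma> = {0..n}}"

lemma good0: "good \<sigma> 0"
  by (simp add: good_def)

lemma sum_ext_filter:
  assumes "\<And>\<sigma> r. \<sigma> \<in> perms n \<Longrightarrow> r \<in> {1..Suc n} \<Longrightarrow> (P (extp \<sigma> n r) \<longleftrightarrow> Q \<sigma> \<and> R \<sigma> r)"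
  shows "card {\<tau>\<in>perms (Suc n). P \<tau>} = (\<Sum>\<sigma>\<in>{\<sigma>\<in>perms n. Q \<sigma>}. card {r\<in>{1..Suc n}. R \<sigma> r})"
proof -
  have "card {\<tau>\<in>perms (Suc n). P \<tau>} = (\<Sum>\<tau>\<in>perms (Suc n). if P \<tau> then 1 else 0)"
    by (rule card_eq_sum_ind[OF finite_perms])
  also have "\<dots> = (\<Sum>\<sigma>\<in>perms n. \<Sum>r\<in>{1..Suc n}. if P (extp \<sigma> n r) then 1 else 0)"
    by (rule sum_perms_Suc)
  also have "\<dots> = (\<Sum>\<sigma>\<in>perms n. if Q \<sigma> then (\<Sum>r\<in>{1..Suc n}. if R \<sigma> r then 1 else 0) else 0)"
    by (rule sum.cong[OF refl]) (auto simp: assms intro!: sum.cong)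
  also have "\<dots> = (\<Sum>\<sigma>\<in>{\<sigma>\<in>perms n. Q \<sigma>}. (\<Sum>r\<in>{1..Suc n}. if R \<sigma> r then 1 else 0))"
    by (rule sum.inter_filter[OF finite_perms, symmetric])
  also have "\<dots> = (\<Sum>\<sigma>\<in>{\<sigma>\<in>perms n. Q \<sigma>}. card {r\<in>{1..Suc n}. R \<sigma> r})"
    by (rule sum.cong[OF refl], rule card_eq_sum_ind[symmetric]) simp
  finally show ?thesis .
qed

lemma perms1: "\<sigma> \<in> perms 1 \<Longrightarrow> \<sigma> 1 = 1 \<and> \<sigma> 0 = 0"
  using perm_range[of \<sigma> 1 1] perm_out[of \<sigma> 1 0] by (auto simp: perms_def)

lemma Lay1: "Lay 1 = perms 1"
proof -
  have "\<sigma> \<in> perms 1 \<Longrightarrow> jset 1 \<sigma> = {0..1}" for \<sigma>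
  proof -
    assume s: "\<sigma> \<in> perms 1"
    have "1 \<in> jset 1 \<sigma>" using jset_top[of \<sigma> 1] perms1[OF s] s
      by (auto simp: perms_def is_involution_on_def)
    moreover have "0 \<in> jset 1 \<sigma>" by (simp add: jset_def)
    moreover have "{0..(1::nat)} = {0, 1}" by auto
    ultimately show ?thesis using jset_sub[of 1 \<sigma>] by auto
  qed
  then show ?thesis by (auto simp: Lay_def)
qed

lemma Lay_props:
  assumes "1 \<le> n"
  shows "card (Lay n) = 2 ^ (n - 1) \<and>
    (\<forall>\<sigma>\<in>Lay n. is_involution_on \<sigma> {1..n} \<and> good \<sigma> n \<and> (\<sigma> n = n \<longrightarrow> good \<sigma> (n - 1)))"
  using assms
proof (induction n rule: nat_induct_at_least)
  case base
  have c: "card (perms 1) = 1"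
    using card_permutations[of "{1..(1::nat)}"] by (simp add: perms_def)
  have "is_involution_on \<sigma> {1..1} \<and> good \<sigma> 1" if "\<sigma> \<in> Lay 1" for \<sigma>
  proof -
    have "\<sigma> 1 = 1" using perms1[of \<sigma>] that Lay1 by simp
    moreover have "{1..(1::nat)} = {1}" by simp
    ultimately have "is_involution_on \<sigma> {1..1}" by (simp add: is_involution_on_def)
    moreover have "good \<sigma> 1" unfolding good_def using \<open>\<sigma> 1 = 1\<close> by (auto simp: le_Suc_eq)
    ultimately show ?thesis by simp
  qed
  moreover have "Lay (Suc 0) = perms (Suc 0)" using Lay1 by simp
  ultimately show ?case using c good0 by simp
next
  case (Suc n)
  have iff: "jset (Suc n) (extp \<sigma> n r) = {0..Suc n} \<longleftrightarrow>
     jset n \<sigma> = {0..n} \<and> is_involution_on (extp \<sigma> n r) {1..Suc n}"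
    if "\<sigma> \<in> perms n" "r \<in> {1..Suc n}" for \<sigma> r
  proof -
    have "{0..Suc n} = {0..n} \<union> (if True then {Suc n} else {})" by auto
    then show ?thesis using jset_ext_iff[of \<sigma> n r "{0..n}" True] that by simp
  qed
  have "card (Lay (Suc n)) = card {\<tau>\<in>perms (Suc n). jset (Suc n) \<tau> = {0..Suc n}}"
    by (simp add: Lay_def)
  also have "\<dots> = (\<Sum>\<sigma>\<in>Lay n. card {r\<in>{1..Suc n}. is_involution_on (extp \<sigma> n r) {1..Suc n}})"
    unfolding Lay_def by (rule sum_ext_filter) (use iff in blast)
  also have "\<dots> = (\<Sum>\<sigma>\<in>Lay n. 2)"
    by (rule sum.cong[OF refl]) (use Suc card_G in \<open>auto simp: Lay_def perms_def\<close>)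
  also have "\<dots> = 2 ^ (Suc n - 1)"
  proof -
    have "2 ^ (n - 1) * 2 = (2::nat) ^ (Suc (n - 1))" by simp
    also have "Suc (n - 1) = Suc n - 1" using Suc.hyps by simp
    finally show ?thesis using Suc.IH by simp
  qed
  finally have card: "card (Lay (Suc n)) = 2 ^ (Suc n - 1)" .
  have props: "is_involution_on \<tau> {1..Suc n} \<and> good \<tau> (Suc n) \<and> (\<tau> (Suc n) = Suc n \<longrightarrow> good \<tau> (Suc n - 1))"
    if t: "\<tau> \<in> Lay (Suc n)" for \<tau>
  proof -
    have "\<tau> \<in> perms (Suc n)" using t by (simp add: Lay_def)
    then obtain \<sigma> r where sr: "\<sigma> \<in> perms n" "r \<in> {1..Suc n}" "\<tau> = extp \<sigma> n r"
      unfolding perms_Suc by auto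
    have "jset (Suc n) \<tau> = {0..Suc n}" using t by (simp add: Lay_def)
    then have h: "jset n \<sigma> = {0..n}" "is_involution_on \<tau> {1..Suc n}" using iff[OF sr(1,2)] sr(3) by auto
    have sL: "\<sigma> \<in> Lay n" using h sr by (simp add: Lay_def)
    have p: "\<sigma> permutes {1..n}" using sr by (simp add: perms_def)
    have ivs: "is_involution_on \<sigma> {1..n}" and gs: "good \<sigma> n" using Suc.IH sL by auto
    have rr: "r = Suc n \<or> (r = \<sigma> n \<and> good \<sigma> n)" using G[OF p Suc.hyps ivs] h sr by auto
    have g1: "good \<tau> (Suc n)" using good_ext[OF p Suc.hyps rr] sr by simp
    have g2: "\<tau> (Suc n) = Suc n \<longrightarrow> good \<tau> n"
    proof
      assume "\<tau> (Suc n) = Suc n"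
      then have "r = Suc n" using sr by simp
      then show "good \<tau> n" using good_ext_top[OF p Suc.hyps gs] sr by simp
    qed
    show ?thesis using h g1 g2 by simp
  qed
  show ?case using card props by blast
qed


definition Bs :: "nat \<Rightarrow> nat \<Rightarrow> (nat \<Rightarrow> nat) set" where
  "Bs m N = {\<tau>\<in>perms N. jset N \<tau> = {0..N} - {m}}"

lemma iff2:
  assumes s: "\<sigma> \<in> perms n" and r: "r \<in> {1..Suc n}" and s2: "s \<in> {1..Suc (Suc n)}"
  shows "jset (Suc (Suc n)) (extp (extp \<sigma> n r) (Suc n) s) = {0..Suc (Suc n)} - {Suc n} \<longleftrightarrow>
    jset n \<sigma> = {0..n} \<and> \<not> is_involution_on (extp \<sigma> n r) {1..Suc n}
    \<and> is_involution_on (extp (extp \<sigma> n r) (Suc n) s) {1..Suc (Suc n)}"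
proof -
  have rp: "extp \<sigma> n r \<in> perms (Suc n)" using extp_permutes s r by (auto simp: perms_def)
  have e: "{0..Suc (Suc n)} - {Suc n} = ({0..n} \<union> (if False then {Suc n} else {})) \<union> (if True then {Suc (Suc n)} else {})"
    by auto
  have "jset (Suc (Suc n)) (extp (extp \<sigma> n r) (Suc n) s) = ({0..n} \<union> (if False then {Suc n} else {})) \<union> (if True then {Suc (Suc n)} else {})
     \<longleftrightarrow> jset (Suc n) (extp \<sigma> n r) = {0..n} \<union> (if False then {Suc n} else {})
         \<and> (is_involution_on (extp (extp \<sigma> n r) (Suc n) s) {1..Suc (Suc n)} \<longleftrightarrow> True)"
    by (rule jset_ext_iff) (use rp s2 in auto)
  also have "jset (Suc n) (extp \<sigma> n r) = {0..n} \<union> (if False then {Suc n} else {}) \<longleftrightarrow>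
      jset n \<sigma> = {0..n} \<and> (is_involution_on (extp \<sigma> n r) {1..Suc n} \<longleftrightarrow> False)"
    by (rule jset_ext_iff) (use s r in auto)
  finally show ?thesis using e by simp
qed

lemma H_iff:
  assumes L: "\<sigma> \<in> Lay n" and n2: "2 \<le> n" and r: "r \<in> {1..Suc n}" and s: "s \<in> {1..Suc (Suc n)}"
  shows "(\<not> is_involution_on (extp \<sigma> n r) {1..Suc n}
    \<and> is_involution_on (extp (extp \<sigma> n r) (Suc n) s) {1..Suc (Suc n)}) \<longleftrightarrow>
    (r = (if \<sigma> n < n then n else \<sigma> (n - 1)) \<and> s = \<sigma> n)"
proof -
  have p: "\<sigma> permutes {1..n}" using L by (simp add: Lay_def perms_def)
  have pr: "is_involution_on \<sigma> {1..n}" "good \<sigma> n" "\<sigma> n = n \<longrightarrow> good \<sigma> (n - 1)"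
    using Lay_props[of n] L n2 by auto
  show ?thesis
  proof
    assume "\<not> is_involution_on (extp \<sigma> n r) {1..Suc n}
      \<and> is_involution_on (extp (extp \<sigma> n r) (Suc n) s) {1..Suc (Suc n)}"
    then show "r = (if \<sigma> n < n then n else \<sigma> (n - 1)) \<and> s = \<sigma> n"
      using H_fwd[OF p n2 pr(1) pr(2)] r s by auto
  next
    assume h: "r = (if \<sigma> n < n then n else \<sigma> (n - 1)) \<and> s = \<sigma> n"
    show "\<not> is_involution_on (extp \<sigma> n r) {1..Suc n}
      \<and> is_involution_on (extp (extp \<sigma> n r) (Suc n) s) {1..Suc (Suc n)}"
    proof (cases "\<sigma> n < n")
      case True
      then show ?thesis using H_lt[OF p n2 pr(1) pr(2) True] h by simp
    next
      case False
      then have "\<sigma> n = n" using perm_range[OF p, of n] n2 by simp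
      then show ?thesis using H_eq[OF p n2 pr(1) _ ] pr(3) h False by simp
    qed
  qed
qed

lemma B_first:
  assumes n2: "2 \<le> n"
  shows "card (Bs (Suc n) (Suc (Suc n))) = 2 ^ (n - 1) \<and>
    (\<forall>\<pi>\<in>Bs (Suc n) (Suc (Suc n)). is_involution_on \<pi> {1..Suc (Suc n)} \<and> \<not> good \<pi> (Suc (Suc n)))"
proof -
  define r0 where "r0 \<sigma> = (if \<sigma> n < n then n else \<sigma> (n - 1))" for \<sigma> :: "nat \<Rightarrow> nat"
  let ?T = "{0..Suc (Suc n)} - {Suc n}"
  let ?P = "\<lambda>\<pi>. jset (Suc (Suc n)) \<pi> = ?T"
  have r0r: "r0 \<sigma> \<in> {1..Suc n}" and tr: "\<sigma> n \<in> {1..Suc (Suc n)}" if "\<sigma> \<in> perms n" for \<sigma>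
  proof -
    have p: "\<sigma> permutes {1..n}" using that by (simp add: perms_def)
    have a: "1 \<le> n - 1" "n - 1 \<le> n" "1 \<le> n" using n2 by auto
    show "r0 \<sigma> \<in> {1..Suc n}" using perm_range[OF p a(1) a(2)] perm_range[OF p a(3) order.refl]
      by (auto simp: r0_def)
    show "\<sigma> n \<in> {1..Suc (Suc n)}" using perm_range[OF p a(3) order.refl] by auto
  qed
  have inner: "(\<Sum>r\<in>{1..Suc n}. \<Sum>s\<in>{1..Suc (Suc n)}. if ?P (extp (extp \<sigma> n r) (Suc n) s) then 1 else 0)
      = (if \<sigma> \<in> Lay n then 1 else (0::nat))" if sp: "\<sigma> \<in> perms n" for \<sigma>
  proof (cases "\<sigma> \<in> Lay n")
    case True
    have "(\<Sum>r\<in>{1..Suc n}. \<Sum>s\<in>{1..Suc (Suc n)}. if ?P (extp (extp \<sigma> n r) (Suc n) s) then 1 else 0)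
       = (\<Sum>r\<in>{1..Suc n}. \<Sum>s\<in>{1..Suc (Suc n)}. if r = r0 \<sigma> then (if s = \<sigma> n then 1 else 0) else (0::nat))"
    proof (rule sum.cong[OF refl], rule sum.cong[OF refl])
      fix r s assume r: "r \<in> {1..Suc n}" and s: "s \<in> {1..Suc (Suc n)}"
      have "?P (extp (extp \<sigma> n r) (Suc n) s) \<longleftrightarrow> (r = r0 \<sigma> \<and> s = \<sigma> n)"
        using iff2[OF sp r s] H_iff[OF True n2 r s] True by (auto simp: Lay_def r0_def)
      then show "(if ?P (extp (extp \<sigma> n r) (Suc n) s) then 1 else 0) =
          (if r = r0 \<sigma> then (if s = \<sigma> n then 1 else 0) else (0::nat))" by auto
    qed
    also have "\<dots> = (\<Sum>r\<in>{1..Suc n}. if r = r0 \<sigma> then 1 else (0::nat))"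
    proof (rule sum.cong[OF refl])
      fix r assume "r \<in> {1..Suc n}"
      have "(\<Sum>s\<in>{1..Suc (Suc n)}. if s = \<sigma> n then 1 else (0::nat)) = 1"
        using tr[OF sp] by (simp del: sum.cl_ivl_Suc)
      then show "(\<Sum>s\<in>{1..Suc (Suc n)}. if r = r0 \<sigma> then (if s = \<sigma> n then 1 else 0) else (0::nat)) =
          (if r = r0 \<sigma> then 1 else 0)" by (simp del: sum.cl_ivl_Suc)
    qed
    also have "\<dots> = 1" using r0r[OF sp] by (simp del: sum.cl_ivl_Suc)
    finally show ?thesis using True by simp
  next
    case False
    have "(\<Sum>r\<in>{1..Suc n}. \<Sum>s\<in>{1..Suc (Suc n)}. if ?P (extp (extp \<sigma> n r) (Suc n) s) then 1 else 0) = (0::nat)"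
    proof (rule sum.neutral, rule ballI, rule sum.neutral, rule ballI)
      fix r s assume r: "r \<in> {1..Suc n}" and s: "s \<in> {1..Suc (Suc n)}"
      show "(if ?P (extp (extp \<sigma> n r) (Suc n) s) then 1 else 0) = (0::nat)"
        using iff2[OF sp r s] False sp by (auto simp: Lay_def)
    qed
    then show ?thesis using False by simp
  qed
  have "card (Bs (Suc n) (Suc (Suc n))) = (\<Sum>\<pi>\<in>perms (Suc (Suc n)). if ?P \<pi> then 1 else 0)"
    unfolding Bs_def by (rule card_eq_sum_ind[OF finite_perms])
  also have "\<dots> = (\<Sum>\<rho>\<in>perms (Suc n). \<Sum>s\<in>{1..Suc (Suc n)}. if ?P (extp \<rho> (Suc n) s) then 1 else 0)"
    by (rule sum_perms_Suc)
  also have "\<dots> = (\<Sum>\<sigma>\<in>perms n. \<Sum>r\<in>{1..Suc n}. \<Sum>s\<in>{1..Suc (Suc n)}. if ?P (extp (extp \<sigma> n r) (Suc n) s) then 1 else 0)"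
    by (rule sum_perms_Suc)
  also have "\<dots> = (\<Sum>\<sigma>\<in>perms n. if \<sigma> \<in> Lay n then 1 else 0)"
    by (rule sum.cong[OF refl]) (rule inner)
  also have "\<dots> = card (Lay n)"
    by (simp add: card_eq_sum_ind[OF finite_perms, symmetric] Lay_def)
  also have "\<dots> = 2 ^ (n - 1)" using Lay_props[of n] n2 by simp
  finally have c: "card (Bs (Suc n) (Suc (Suc n))) = 2 ^ (n - 1)" .
  have props: "is_involution_on \<pi> {1..Suc (Suc n)} \<and> \<not> good \<pi> (Suc (Suc n))"
    if pB: "\<pi> \<in> Bs (Suc n) (Suc (Suc n))" for \<pi>
  proof -
    have "\<pi> \<in> perms (Suc (Suc n))" using pB by (simp add: Bs_def)
    then obtain \<rho> s where rs: "\<rho> \<in> perms (Suc n)" "s \<in> {1..Suc (Suc n)}" "\<pi> = extp \<rho> (Suc n) s"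
      unfolding perms_Suc[of "Suc n"] by auto
    from rs(1) obtain \<sigma> r where sr: "\<sigma> \<in> perms n" "r \<in> {1..Suc n}" "\<rho> = extp \<sigma> n r"
      unfolding perms_Suc[of n] by auto
    have "?P \<pi>" using pB by (simp add: Bs_def)
    then have h: "jset n \<sigma> = {0..n}" "\<not> is_involution_on \<rho> {1..Suc n}" "is_involution_on \<pi> {1..Suc (Suc n)}"
      using iff2[OF sr(1) sr(2) rs(2)] rs(3) sr(3) by auto
    have L: "\<sigma> \<in> Lay n" using h sr by (simp add: Lay_def)
    have rr: "r = r0 \<sigma> \<and> s = \<sigma> n" using H_iff[OF L n2 sr(2) rs(2)] h rs sr by (simp add: r0_def)
    have p: "\<sigma> permutes {1..n}" using sr by (simp add: perms_def)
    have pr: "is_involution_on \<sigma> {1..n}" "good \<sigma> n" "\<sigma> n = n \<longrightarrow> good \<sigma> (n - 1)"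
      using Lay_props[of n] L n2 by auto
    have "\<not> good \<pi> (Suc (Suc n))"
    proof (cases "\<sigma> n < n")
      case True
      then show ?thesis using H_lt[OF p n2 pr(1) pr(2) True] rr rs sr by (simp add: r0_def)
    next
      case False
      then have "\<sigma> n = n" using perm_range[OF p, of n] n2 by simp
      then show ?thesis using H_eq[OF p n2 pr(1) _ ] pr(3) rr rs sr False by (simp add: r0_def)
    qed
    then show ?thesis using h by simp
  qed
  show ?thesis using c props by blast
qed

lemma B_next:
  assumes mN: "m \<le> N" and N1: "1 \<le> N" and inv: "\<forall>\<tau>\<in>Bs m N. is_involution_on \<tau> {1..N}"
  shows "card (Bs m (Suc N)) = (\<Sum>\<tau>\<in>Bs m N. if good \<tau> N then 2 else 1)
    \<and> (\<forall>\<tau>\<in>Bs m (Suc N). is_involution_on \<tau> {1..Suc N} \<and> good \<tau> (Suc N))"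
proof -
  have iff: "jset (Suc N) (extp \<tau> N r) = {0..Suc N} - {m} \<longleftrightarrow>
     jset N \<tau> = {0..N} - {m} \<and> is_involution_on (extp \<tau> N r) {1..Suc N}"
    if "\<tau> \<in> perms N" "r \<in> {1..Suc N}" for \<tau> r
  proof -
    have "{0..Suc N} - {m} = ({0..N} - {m}) \<union> (if True then {Suc N} else {})" using mN by auto
    then show ?thesis using jset_ext_iff[of \<tau> N r "{0..N} - {m}" True] that by auto
  qed
  have "card (Bs m (Suc N)) = (\<Sum>\<tau>\<in>Bs m N. card {r\<in>{1..Suc N}. is_involution_on (extp \<tau> N r) {1..Suc N}})"
    unfolding Bs_def by (rule sum_ext_filter) (use iff in blast)
  also have "\<dots> = (\<Sum>\<tau>\<in>Bs m N. if good \<tau> N then 2 else 1)"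
    by (rule sum.cong[OF refl]) (use inv N1 card_G in \<open>auto simp: Bs_def perms_def\<close>)
  finally have c: "card (Bs m (Suc N)) = (\<Sum>\<tau>\<in>Bs m N. if good \<tau> N then 2 else 1)" .
  have props: "is_involution_on \<tau>' {1..Suc N} \<and> good \<tau>' (Suc N)" if t: "\<tau>' \<in> Bs m (Suc N)" for \<tau>'
  proof -
    have "\<tau>' \<in> perms (Suc N)" using t by (simp add: Bs_def)
    then obtain \<tau> r where sr: "\<tau> \<in> perms N" "r \<in> {1..Suc N}" "\<tau>' = extp \<tau> N r"
      unfolding perms_Suc by auto
    have "jset (Suc N) \<tau>' = {0..Suc N} - {m}" using t by (simp add: Bs_def)
    then have h: "jset N \<tau> = {0..N} - {m}" "is_involution_on \<tau>' {1..Suc N}" using iff[OF sr(1,2)] sr(3) by auto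
    have tB: "\<tau> \<in> Bs m N" using h sr by (simp add: Bs_def)
    have p: "\<tau> permutes {1..N}" using sr by (simp add: perms_def)
    have ivs: "is_involution_on \<tau> {1..N}" using inv tB by auto
    have rr: "r = Suc N \<or> (r = \<tau> N \<and> good \<tau> N)" using G[OF p N1 ivs] h sr by auto
    have "good \<tau>' (Suc N)" using good_ext[OF p N1 rr] sr by simp
    then show ?thesis using h by simp
  qed
  show ?thesis using c props by blast
qed

lemma B_all:
  assumes n2: "2 \<le> n" and N: "Suc (Suc (Suc n)) \<le> N"
  shows "card (Bs (Suc n) N) = 2 ^ (n - 1) * 2 ^ (N - Suc (Suc (Suc n))) \<and>
    (\<forall>\<tau>\<in>Bs (Suc n) N. is_involution_on \<tau> {1..N} \<and> good \<tau> N)"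
  using N
proof (induction N rule: nat_induct_at_least)
  case base
  have f: "card (Bs (Suc n) (Suc (Suc n))) = 2 ^ (n - 1)"
    "\<forall>\<pi>\<in>Bs (Suc n) (Suc (Suc n)). is_involution_on \<pi> {1..Suc (Suc n)} \<and> \<not> good \<pi> (Suc (Suc n))"
    using B_first[OF n2] by auto
  have "card (Bs (Suc n) (Suc (Suc (Suc n)))) = (\<Sum>\<tau>\<in>Bs (Suc n) (Suc (Suc n)). if good \<tau> (Suc (Suc n)) then 2 else 1)
    \<and> (\<forall>\<tau>\<in>Bs (Suc n) (Suc (Suc (Suc n))). is_involution_on \<tau> {1..Suc (Suc (Suc n))} \<and> good \<tau> (Suc (Suc (Suc n))))"
    by (rule B_next) (use f in auto)
  moreover have "(\<Sum>\<tau>\<in>Bs (Suc n) (Suc (Suc n)). if good \<tau> (Suc (Suc n)) then 2 else 1) = (\<Sum>\<tau>\<in>Bs (Suc n) (Suc (Suc n)). (1::nat))"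
    by (rule sum.cong[OF refl]) (use f in auto)
  ultimately show ?case using f by simp
next
  case (Suc N)
  have "card (Bs (Suc n) (Suc N)) = (\<Sum>\<tau>\<in>Bs (Suc n) N. if good \<tau> N then 2 else 1)
    \<and> (\<forall>\<tau>\<in>Bs (Suc n) (Suc N). is_involution_on \<tau> {1..Suc N} \<and> good \<tau> (Suc N))"
    by (rule B_next) (use Suc in auto)
  moreover have "(\<Sum>\<tau>\<in>Bs (Suc n) N. if good \<tau> N then 2 else 1) = (\<Sum>\<tau>\<in>Bs (Suc n) N. (2::nat))"
    by (rule sum.cong[OF refl]) (use Suc in auto)
  moreover have "Suc N - Suc (Suc (Suc n)) = Suc (N - Suc (Suc (Suc n)))" using Suc.hyps by simp
  ultimately show ?case using Suc.IH by simp
qed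

theorem mainTheorem13:
  fixes k :: nat and E :: "nat set"
  assumes "k \<ge> 5"
    and "{0, 1, 2, k} \<subseteq> E" and "E \<subset> {0..k}" and "card E = k"
  shows "card {\<tau>. \<tau> permutes {1..k} \<and> jset k \<tau> = E} =
           (if k - 1 \<notin> E then 2 ^ (k - 3) else 2 ^ (k - 4))"
proof -
  have fE: "finite E" using assms(3) finite_subset by blast
  have "card ({0..k} - E) = card {0..k} - card E"
    using card_Diff_subset[OF fE] assms(3) by auto
  then have "card ({0..k} - E) = 1" using assms(4) by simp
  then obtain m where mD: "{0..k} - E = {m}" by (rule card_1_singletonE)
  have Eeq: "E = {0..k} - {m}" using mD assms(3) by blast
  have m: "m \<in> {0..k}" "m \<notin> E" using mD by auto
  have sub: "0 \<in> E" "1 \<in> E" "2 \<in> E" "k \<in> E" using assms(2) by auto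
  have "m \<noteq> 0" "m \<noteq> 1" "m \<noteq> 2" "m \<noteq> k" using sub m(2) by metis+
  moreover have "m \<le> k" using m(1) by simp
  ultimately have m3: "3 \<le> m" "m < k" by arith+
  define n where "n = m - 1"
  have n2: "2 \<le> n" and mn: "m = Suc n" using m3 by (auto simp: n_def)
  have S: "{\<tau>. \<tau> permutes {1..k} \<and> jset k \<tau> = E} = Bs (Suc n) k"
    using Eeq mn by (auto simp: Bs_def perms_def)
  show ?thesis
  proof (cases "k - 1 = m")
    case True
    then have k: "k = Suc (Suc n)" using mn m3 by simp
    have "k - 1 \<notin> E" using True m by simp
    moreover have "card (Bs (Suc n) k) = 2 ^ (k - 3)" using B_first[OF n2] k by simp
    ultimately show ?thesis using S by simp
  next
    case False
    then have k: "Suc (Suc (Suc n)) \<le> k" using mn m3 by simp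
    have "k - 1 \<in> E" using False Eeq m3 by simp
    moreover have "card (Bs (Suc n) k) = 2 ^ (n - 1) * 2 ^ (k - Suc (Suc (Suc n)))" using B_all[OF n2 k] by simp
    moreover have "(2::nat) ^ (n - 1) * 2 ^ (k - Suc (Suc (Suc n))) = 2 ^ (k - 4)"
    proof -
      have "(2::nat) ^ (n - 1) * 2 ^ (k - Suc (Suc (Suc n))) = 2 ^ (n - 1 + (k - Suc (Suc (Suc n))))"
        by (simp add: power_add)
      also have "n - 1 + (k - Suc (Suc (Suc n))) = k - 4" using n2 k by simp
      finally show ?thesis .
    qed
    ultimately show ?thesis using S by simp
  qed
qed

end
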